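(* Let $\mathcal{T}$ be a single-elimination tournament, $u\in V(\mathcal{T})$, $\mathcal{B}_u$ a non-empty set of brackets of $\mathcal{T}_u$, and $\mathcal{A}$ a partition of $P(\mathcal{T})\setminus P(u)$ such that for every $a\in P(\mathcal{T})\setminus P(u)$, the part $A\in\mathcal{A}$ with $a\in A$ contains some $b\in A\setminus\{a\}$ with $b\in P(x)$ for every match $x$ with $a\in P(x)$. Then there exists a set of brackets $\mathcal{B}$ of $\mathcal{T}$ with \[|\mathcal{B}|=|P(\mathcal{T})\setminus P(u)|+\max\{0,|\mathcal{B}_u|-|\mathcal{A}|\}\] such that, for every scoring system $\sigma$ of $\mathcal{T}$, $\mathcal{B}$ is $\sigma$-resolving whenever $\mathcal{B}_u$ is $\sigma_u$-resolving.
   Context: A single-elimination tournament is a finite directed graph $\mathcal{T}$ such that: (a) $\mathcal{T}$ has exactly one sink (vertex with no out-neighbours); (b) every non-sink vertex has exactly one out-neighbour; (c) $\mathcal{T}$ has no directed cycles; (d) $|N^-(v)|\ne 1$ for every vertex $v$, where $N^-(v)$ denotes the set of in-neighbours of $v$. The players $P(\mathcal{T})$ are the sources and the matches are $M(\mathcal{T})=V(\mathcal{T})\setminus P(\mathcal{T})$. For a vertex $u$, $P(u)$ is the set of players $a$ for which there is a directed walk from $a$ to $u$ (length $0$ allowed). For $u\in V(\mathcal{T})$, $\mathcal{T}_u$ is the digraph obtained from $\mathcal{T}$ by deleting every vertex $v$ with $P(v)\not\subseteq P(u)$ (it is a single-elimination tournament), and $\sigma_u$ is the restriction of $\sigma$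 to $M(\mathcal{T})\cap V(\mathcal{T}_u)=M(\mathcal{T}_u)$. A bracket is a function $B:V(\mathcal{T})\to P(\mathcal{T})$ with $B(a)=a$ for every player $a$ and $B(x)\in\{B(u):u\in N^-(x)\}$ for every match $x$. A scoring system is any function $\sigma:M(\mathcal{T})\to\mathbb{R}_{>0}$. For brackets $B,B'$ let $\mathrm{score}_\sigma(B,B')=\sum_{x\in M(\mathcal{T}):\,B(x)=B'(x)}\sigma(x)$. A set of brackets $\mathcal{B}$ is $\sigma$-resolving if for every pair of distinct brackets $B\ne B'$ there is $B_i\in\mathcal{B}$ with $\mathrm{score}_\sigma(B_i,B)\ne\mathrm{score}_\sigma(B_i,B')$ (and analogously for $\mathcal{T}_u,\sigma_u$). *)

theory Defs
  imports Complex_Main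
begin

definition out_nbrs :: "('v \<times> 'v) set \<Rightarrow> 'v \<Rightarrow> 'v set" where
  "out_nbrs E v = {w. (v, w) \<in> E}"

definition in_nbrs :: "('v \<times> 'v) set \<Rightarrow> 'v \<Rightarrow> 'v set" where
  "in_nbrs E v = {w. (w, v) \<in> E}"

definition is_SET :: "'v set \<Rightarrow> ('v \<times> 'v) set \<Rightarrow> bool" where
  "is_SET V E \<longleftrightarrow> finite V \<and> E \<subseteq> V \<times> V
     \<and> (\<exists>!s. s \<in> V \<and> out_nbrs E s = {})
     \<and> (\<forall>v\<in>V. out_nbrs E v \<noteq> {} \<longrightarrow> card (out_nbrs E v) = 1)
     \<and> acyclic E
     \<and> (\<forall>v\<in>V. card (in_nbrs E v) \<noteq> 1)"

definition players :: "'v set \<Rightarrow> ('v \<times> 'v) set \<Rightarrow> 'v set" where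
  "players V E = {v \<in> V. in_nbrs E v = {}}"

definition matches :: "'v set \<Rightarrow> ('v \<times> 'v) set \<Rightarrow> 'v set" where
  "matches V E = V - players V E"

definition Pset :: "'v set \<Rightarrow> ('v \<times> 'v) set \<Rightarrow> 'v \<Rightarrow> 'v set" where
  "Pset V E u = {a \<in> players V E. (a, u) \<in> E\<^sup>*}"

definition sub_V :: "'v set \<Rightarrow> ('v \<times> 'v) set \<Rightarrow> 'v \<Rightarrow> 'v set" where
  "sub_V V E u = {v \<in> V. Pset V E v \<subseteq> Pset V E u}"

definition sub_E :: "'v set \<Rightarrow> ('v \<times> 'v) set \<Rightarrow> 'v \<Rightarrow> ('v \<times> 'v) set" where
  "sub_E V E u = E \<inter> (sub_V V E u \<times> sub_V V E u)"

definition is_bracket :: "'v set \<Rightarrow> ('v \<times> 'v) set \<Rightarrow> ('v \<Rightarrow> 'v) \<Rightarrow> bool" where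
  "is_bracket V E B \<longleftrightarrow>
     (\<forall>a\<in>players V E. B a = a)
     \<and> (\<forall>x\<in>matches V E. B x \<in> B ` in_nbrs E x)
     \<and> (\<forall>v. v \<notin> V \<longrightarrow> B v = undefined)"

definition scoring_system :: "'v set \<Rightarrow> ('v \<times> 'v) set \<Rightarrow> ('v \<Rightarrow> real) \<Rightarrow> bool" where
  "scoring_system V E \<sigma> \<longleftrightarrow> (\<forall>x\<in>matches V E. \<sigma> x > 0)"

definition score :: "'v set \<Rightarrow> ('v \<times> 'v) set \<Rightarrow> ('v \<Rightarrow> real) \<Rightarrow> ('v \<Rightarrow> 'v) \<Rightarrow> ('v \<Rightarrow> 'v) \<Rightarrow> real" where
  "score V E \<sigma> B B' = (\<Sum>x\<in>{x \<in> matches V E. B x = B' x}. \<sigma> x)"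

definition resolving :: "'v set \<Rightarrow> ('v \<times> 'v) set \<Rightarrow> ('v \<Rightarrow> real) \<Rightarrow> ('v \<Rightarrow> 'v) set \<Rightarrow> bool" where
  "resolving V E \<sigma> \<B> \<longleftrightarrow>
     (\<forall>B B'. is_bracket V E B \<longrightarrow> is_bracket V E B' \<longrightarrow> B \<noteq> B' \<longrightarrow>
        (\<exists>Bi\<in>\<B>. score V E \<sigma> Bi B \<noteq> score V E \<sigma> Bi B'))"

end

theory Submission
  imports Defs "HOL-Library.FuncSet"
begin

locale tour =
  fixes V :: "'v set" and E :: "('v \<times> 'v) set"
  assumes T: "is_SET V E"
begin

lemma finV: "finite V" using T by (simp add: is_SET_def)
lemma EV: "E \<subseteq> V \<times> V" using T by (simp add: is_SET_def)
lemma finE: "finite E" using finV EV by (meson finite_SigmaI finite_subset)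
lemma acyc: "acyclic E" using T by (simp add: is_SET_def)

lemma func: assumes "(v,w) \<in> E" "(v,w') \<in> E" shows "w = w'"
proof -
  have v: "v \<in> V" using assms EV by auto
  have ne: "out_nbrs E v \<noteq> {}" using assms by (auto simp: out_nbrs_def)
  hence "card (out_nbrs E v) = 1" using T v by (auto simp: is_SET_def)
  then obtain z where "out_nbrs E v = {z}" using card_1_singletonE by blast
  hence "w \<in> {z}" "w' \<in> {z}" using assms by (auto simp: out_nbrs_def)
  thus ?thesis by simp
qed

lemma wfE: "wf E" using finite_acyclic_wf finE acyc by blast
lemma wfEc: "wf (E\<inverse>)" using finite_acyclic_wf_converse finE acyc by blast

lemma chain: assumes "(a,b) \<in> E\<^sup>*" "(a,c) \<in> E\<^sup>*" shows "(b,c) \<in> E\<^sup>* \<or> (c,b) \<in> E\<^sup>*"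
  using assms
proof (induction arbitrary: c rule: converse_rtrancl_induct)
  case base
  then show ?case by simp
next
  case (step a a')
  from step.prems show ?case
  proof (cases rule: converse_rtranclE)
    case base
    then show ?thesis using step by (meson converse_rtrancl_into_rtrancl)
  next
    case (step a'')
    then have "a'' = a'" using func \<open>(a,a') \<in> E\<close> by blast
    then show ?thesis using step.IH step by blast
  qed
qed

lemma antisym: assumes "(b,c) \<in> E\<^sup>*" "(c,b) \<in> E\<^sup>*" shows "b = c"
proof (rule ccontr)
  assume "b \<noteq> c"
  then have "(b,c) \<in> E\<^sup>+" using assms rtrancl_eq_or_trancl by metis
  then have "(b,b) \<in> E\<^sup>+" using assms(2) by simp
  then show False using acyc by (simp add: acyclic_def)
qed

lemma player_in: assumes "p \<in> players V E" "(b,p) \<in> E\<^sup>*" shows "b = p"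
  using assms(2)
proof (cases rule: rtranclE)
  case (step y)
  then have "y \<in> in_nbrs E p" by (simp add: in_nbrs_def)
  then show ?thesis using assms(1) by (simp add: players_def)
qed simp

lemma match_iff: "x \<in> matches V E \<longleftrightarrow> x \<in> V \<and> in_nbrs E x \<noteq> {}"
  by (auto simp: matches_def players_def)

lemma has_in_match: "(d,x) \<in> E \<Longrightarrow> x \<in> matches V E"
  using EV by (auto simp: match_iff in_nbrs_def)

lemma bracket_in_P:
  assumes B: "is_bracket V E B"
  shows "x \<in> V \<Longrightarrow> B x \<in> players V E \<and> (B x, x) \<in> E\<^sup>*"
proof (induction x rule: wf_induct[OF wfE])
  case (1 x)
  show ?case
  proof (cases "x \<in> players V E")
    case True
    then show ?thesis using B by (simp add: is_bracket_def)
  next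
    case False
    then have "x \<in> matches V E" using 1 by (simp add: matches_def)
    then obtain d where d: "d \<in> in_nbrs E x" "B x = B d" using B by (auto simp: is_bracket_def)
    then have dx: "(d,x) \<in> E" by (simp add: in_nbrs_def)
    then have "d \<in> V" using EV by auto
    then have "B d \<in> players V E \<and> (B d, d) \<in> E\<^sup>*" using 1 dx by blast
    then show ?thesis using d dx by (metis rtrancl.rtrancl_into_rtrancl)
  qed
qed

lemma inn_disj:
  assumes "(c1,x) \<in> E" "(c2,x) \<in> E" "(a,c1) \<in> E\<^sup>*" "(a,c2) \<in> E\<^sup>*"
  shows "c1 = c2"
proof -
  have gen: "c1 = c2" if h: "(c1,x) \<in> E" "(c2,x) \<in> E" "(c1,c2) \<in> E\<^sup>*" for c1 c2
  proof (rule ccontr)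
    assume ne: "c1 \<noteq> c2"
    from h(3) ne obtain y where y: "(c1,y) \<in> E" "(y,c2) \<in> E\<^sup>*"
      by (metis converse_rtranclE)
    then have "y = x" using func h(1) by blast
    then have "(x,x) \<in> E\<^sup>+" using y h(2) by (meson rtrancl_into_trancl1)
    then show False using acyc by (simp add: acyclic_def)
  qed
  from chain[OF assms(3,4)] show ?thesis
    using gen assms(1,2) by metis
qed

lemma mono_win:
  assumes B: "is_bracket V E B" and yx: "(y,x) \<in> E\<^sup>*"
  shows "B x = c \<Longrightarrow> (c,y) \<in> E\<^sup>* \<Longrightarrow> x \<in> V \<Longrightarrow> B y = c"
  using yx
proof (induction x rule: rtrancl_induct)
  case base
  then show ?case by simp
next
  case (step z x)
  have "x \<in> matches V E" using step.hyps(2) has_in_match by blast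
  then obtain d where d: "d \<in> in_nbrs E x" "B d = c" using B step.prems(1)
    by (auto simp: is_bracket_def)
  then have dx: "(d,x) \<in> E" by (simp add: in_nbrs_def)
  then have dV: "d \<in> V" using EV by auto
  have "(c,d) \<in> E\<^sup>*" using bracket_in_P[OF B dV] d by simp
  moreover have "(c,z) \<in> E\<^sup>*" using step.prems(2) step.hyps(1) by simp
  ultimately have "d = z" using inn_disj dx step.hyps(2) by blast
  moreover have "z \<in> V" using step.hyps(2) EV by auto
  ultimately show ?case using step.IH d step.prems by blast
qed

lemma sink: obtains z where "z \<in> V" "\<forall>v\<in>V. (v,z) \<in> E\<^sup>*"
proof -
  obtain s where s: "s \<in> V" "out_nbrs E s = {}" using T by (auto simp: is_SET_def)
  have uq: "\<And>t. t \<in> V \<Longrightarrow> out_nbrs E t = {} \<Longrightarrow> t = s" using T s by (auto simp: is_SET_def)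
  have "v \<in> V \<longrightarrow> (v,s) \<in> E\<^sup>*" for v
  proof (induction v rule: wf_induct[OF wfEc])
    case (1 v)
    show ?case
    proof
      assume v: "v \<in> V"
      show "(v,s) \<in> E\<^sup>*"
      proof (cases "out_nbrs E v = {}")
        case True then show ?thesis using uq v by simp
      next
        case False
        then obtain w where w: "(v,w) \<in> E" by (auto simp: out_nbrs_def)
        then have "w \<in> V" using EV by auto
        then have "(w,s) \<in> E\<^sup>*" using 1 w by auto
        then show ?thesis using w by (meson converse_rtrancl_into_rtrancl)
      qed
    qed
  qed
  then show ?thesis using that s by blast
qed

end


locale ctx = tour V E for V :: "'v set" and E +
  fixes u :: 'v and Bu :: "('v \<Rightarrow> 'v) set" and AA :: "'v set set"
  assumes u: "u \<in> V"
    and Bu_brackets: "\<forall>B\<in>Bu. is_bracket (sub_V V E u) (sub_E V E u) B"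
    and Bu_ne: "Bu \<noteq> {}"
    and A_part: "\<Union>AA = players V E - Pset V E u"
    and A_nonempty: "\<forall>A\<in>AA. A \<noteq> {}"
    and A_disj: "\<forall>A\<in>AA. \<forall>A'\<in>AA. A \<noteq> A' \<longrightarrow> A \<inter> A' = {}"
    and A_cond: "\<forall>a\<in>players V E - Pset V E u. \<forall>A\<in>AA. a \<in> A \<longrightarrow>
         (\<exists>b\<in>A - {a}. \<forall>x\<in>matches V E. a \<in> Pset V E x \<longrightarrow> b \<in> Pset V E x)"
begin

abbreviation "SV \<equiv> sub_V V E u"
abbreviation "SE \<equiv> sub_E V E u"
abbreviation "PL \<equiv> players V E"
abbreviation "M \<equiv> matches V E"
abbreviation "W \<equiv> players V E - Pset V E u"

definition path :: "'v \<Rightarrow> 'v set" where "path a = {x \<in> M. (a,x) \<in> E\<^sup>*}"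

lemma finM: "finite M" using finV by (simp add: matches_def)
lemma finW: "finite W" using finV by (simp add: players_def)
lemma PL_V: "PL \<subseteq> V" by (auto simp: players_def)
lemma M_V: "M \<subseteq> V" by (auto simp: matches_def)
lemma path_M: "path a \<subseteq> M" by (auto simp: path_def)
lemma fin_path: "finite (path a)" using finM path_M finite_subset by blast

lemma SV_iff: "x \<in> SV \<longleftrightarrow> x \<in> V \<and> Pset V E x \<subseteq> Pset V E u"
  by (simp add: sub_V_def)

lemma P_mono: "(x,y) \<in> E\<^sup>* \<Longrightarrow> Pset V E x \<subseteq> Pset V E y"
  by (auto simp: Pset_def)

lemma u_SV: "u \<in> SV" using u by (simp add: SV_iff)

lemma inn_SV: "x \<in> SV \<Longrightarrow> (d,x) \<in> E \<Longrightarrow> d \<in> SV"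
  using P_mono[of d x] EV by (auto simp: SV_iff)

lemma SV_V: "SV \<subseteq> V" by (auto simp: SV_iff)

lemma in_nbrs_SE: "x \<in> SV \<Longrightarrow> in_nbrs SE x = in_nbrs E x"
  using inn_SV by (auto simp: in_nbrs_def sub_E_def)

lemma players_SE: "players SV SE = PL \<inter> SV"
  using in_nbrs_SE SV_V by (auto simp: players_def)

lemma matches_SE: "matches SV SE = M \<inter> SV"
  using players_SE SV_V by (auto simp: matches_def)

lemma W_reach_notSV: "a \<in> W \<Longrightarrow> (a,x) \<in> E\<^sup>* \<Longrightarrow> x \<notin> SV"
  by (auto simp: SV_iff Pset_def)

lemma Mout_has: "x \<in> M - SV \<Longrightarrow> \<exists>a\<in>W. (a,x) \<in> E\<^sup>*"
  using M_V by (auto simp: SV_iff Pset_def)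

lemma path_notSV: "a \<in> W \<Longrightarrow> path a \<subseteq> M - SV"
  using W_reach_notSV by (auto simp: path_def)

definition restr :: "('v \<Rightarrow> 'v) \<Rightarrow> 'v \<Rightarrow> 'v" where
  "restr B = (\<lambda>x. if x \<in> SV then B x else undefined)"

lemma restr_br: assumes B: "is_bracket V E B" shows "is_bracket SV SE (restr B)"
  unfolding is_bracket_def
proof (intro conjI ballI allI impI)
  fix a assume "a \<in> players SV SE"
  then show "restr B a = a" using B players_SE by (auto simp: restr_def is_bracket_def)
next
  fix x assume x: "x \<in> matches SV SE"
  then have xs: "x \<in> SV" "x \<in> M" using matches_SE by auto
  then obtain d where d: "d \<in> in_nbrs E x" "B x = B d" using B by (auto simp: is_bracket_def)
  then have "d \<in> SV" using inn_SV xs by (auto simp: in_nbrs_def)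
  then show "restr B x \<in> restr B ` in_nbrs SE x"
    using d xs in_nbrs_SE by (auto simp: restr_def)
next
  fix v assume "v \<notin> SV" then show "restr B v = undefined" by (simp add: restr_def)
qed

lemma Bu_undef: "K \<in> Bu \<Longrightarrow> x \<notin> SV \<Longrightarrow> K x = undefined"
  using Bu_brackets by (auto simp: is_bracket_def)

lemma Bu_eqI: "K \<in> Bu \<Longrightarrow> K' \<in> Bu \<Longrightarrow> (\<forall>x\<in>SV. K x = K' x) \<Longrightarrow> K = K'"
  using Bu_undef by (metis ext)

lemma partner: assumes "a \<in> W" "A \<in> AA" "a \<in> A"
  shows "\<exists>b\<in>A - {a}. path a \<subseteq> path b"
proof -
  obtain b where b: "b \<in> A - {a}" "\<forall>x\<in>M. a \<in> Pset V E x \<longrightarrow> b \<in> Pset V E x"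
    using A_cond assms by blast
  have "a \<in> PL" using assms by simp
  then have "path a \<subseteq> path b" using b(2) by (auto simp: path_def Pset_def)
  then show ?thesis using b by blast
qed

lemma parts_sub: "A \<in> AA \<Longrightarrow> A \<subseteq> W" using A_part by blast

lemma finAA: "finite AA"
proof -
  have "AA \<subseteq> Pow W" using parts_sub by blast
  then show ?thesis using finW by (meson finite_Pow_iff finite_subset)
qed

definition partof :: "'v \<Rightarrow> 'v set" where "partof a = (SOME A. A \<in> AA \<and> a \<in> A)"

lemma partof: assumes "a \<in> W" shows "partof a \<in> AA \<and> a \<in> partof a"
proof -
  have "\<exists>A. A \<in> AA \<and> a \<in> A" using A_part assms by blast
  then show ?thesis unfolding partof_def by (rule someI_ex)
qed

lemma partof_eq: "a \<in> W \<Longrightarrow> A \<in> AA \<Longrightarrow> a \<in> A \<Longrightarrow> partof a = A"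
  using partof A_disj by blast

lemma finBu: "finite Bu"
proof -
  have "Bu \<subseteq> PiE SV (\<lambda>_. V)"
  proof
    fix K assume K: "K \<in> Bu"
    then have Kb: "is_bracket SV SE K" using Bu_brackets by blast
    have "x \<in> SV \<longrightarrow> K x \<in> V" for x
    proof (induction x rule: wf_induct[OF wfE])
      case (1 x)
      show ?case
      proof
        assume xs: "x \<in> SV"
        show "K x \<in> V"
        proof (cases "x \<in> players SV SE")
          case True
          then show ?thesis using Kb xs SV_V by (auto simp: is_bracket_def)
        next
          case False
          then have "x \<in> matches SV SE" using xs by (simp add: matches_def)
          then obtain d where d: "d \<in> in_nbrs SE x" "K x = K d" using Kb by (auto simp: is_bracket_def)
          then have "(d,x) \<in> E" "d \<in> SV" using in_nbrs_SE xs inn_SV by (auto simp: in_nbrs_def)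
          then show ?thesis using 1 d by auto
        qed
      qed
    qed
    then show "K \<in> PiE SV (\<lambda>_. V)" using Bu_undef K by (auto simp: PiE_def extensional_def)
  qed
  moreover have "finite (PiE SV (\<lambda>_. V))" using finV SV_V finite_subset by (blast intro: finite_PiE)
  ultimately show ?thesis using finite_subset by blast
qed

end

context ctx
begin

definition idx :: "'v \<Rightarrow> nat" where "idx = (SOME h. bij_betw h W {0..<card W})"

lemma idx_bij: "bij_betw idx W {0..<card W}"
  unfolding idx_def using ex_bij_betw_finite_nat[OF finW] by (rule someI_ex)

lemma idx_lt: "a \<in> W \<Longrightarrow> idx a < card W"
  using idx_bij by (auto simp: bij_betw_def)

lemma idx_inj: "inj_on idx W" using idx_bij by (auto simp: bij_betw_def)

definition rk :: "'v \<Rightarrow> nat" where "rk a = (card M - card (path a)) * card W + idx a"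

lemma rk_inj: "inj_on rk W"
proof (rule inj_onI)
  fix a b assume ab: "a \<in> W" "b \<in> W" "rk a = rk b"
  have "rk a mod card W = idx a" using idx_lt[OF ab(1)] by (simp add: rk_def)
  moreover have "rk b mod card W = idx b" using idx_lt[OF ab(2)] by (simp add: rk_def)
  ultimately have "idx a = idx b" using ab by simp
  then show "a = b" using idx_inj ab by (auto dest: inj_onD)
qed

lemma rk_plen: assumes "a \<in> W" "b \<in> W" "card (path a) < card (path b)"
  shows "rk b < rk a"
proof -
  let ?n = "card W" and ?m = "card M"
  have pb: "card (path b) \<le> ?m" using path_M finM card_mono by blast
  have "?m - card (path b) + 1 \<le> ?m - card (path a)" using assms(3) pb by linarith
  then have "(?m - card (path b) + 1) * ?n \<le> (?m - card (path a)) * ?n" by (rule mult_right_mono) simp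
  moreover have "rk b < (?m - card (path b) + 1) * ?n" using idx_lt[OF assms(2)] by (simp add: rk_def)
  ultimately show ?thesis by (simp add: rk_def)
qed

definition Par :: "'v \<Rightarrow> 'v set" where
  "Par a = {b \<in> partof a - {a}. path a \<subseteq> path b \<and> rk b < rk a}"

definition "R = {a \<in> W. Par a = {}}"
definition "NR = W - R"

definition tw :: "'v \<Rightarrow> 'v" where
  "tw r = (SOME b. b \<in> partof r - {r} \<and> path b = path r \<and> rk r < rk b)"

lemma partof_W: "a \<in> W \<Longrightarrow> partof a \<subseteq> W" using partof parts_sub by blast

lemma tw_props: assumes r: "r \<in> R"
  shows "tw r \<in> partof r - {r} \<and> path (tw r) = path r \<and> rk r < rk (tw r)"
proof -
  have rW: "r \<in> W" and Pr: "Par r = {}" using r by (auto simp: R_def)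
  obtain b where b: "b \<in> partof r - {r}" "path r \<subseteq> path b"
    using partner[OF rW] partof[OF rW] by blast
  have bW: "b \<in> W" using b partof_W[OF rW] by blast
  have "\<not> rk b < rk r" using Pr b by (auto simp: Par_def)
  moreover have "rk b \<noteq> rk r" using rk_inj bW rW b(1) by (auto dest: inj_onD)
  ultimately have lt: "rk r < rk b" by simp
  have "\<not> card (path r) < card (path b)" using rk_plen[OF rW bW] lt by auto
  moreover have "card (path r) \<le> card (path b)" using b(2) fin_path card_mono by blast
  ultimately have "card (path r) = card (path b)" by simp
  then have "path b = path r" using b(2) fin_path card_subset_eq by metis
  then have "\<exists>b. b \<in> partof r - {r} \<and> path b = path r \<and> rk r < rk b" using b lt by blast
  then show ?thesis unfolding tw_def by (rule someI_ex)
qed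

lemma R_W: "R \<subseteq> W" by (auto simp: R_def)
lemma NR_W: "NR \<subseteq> W" by (auto simp: NR_def)
lemma R_NR: "a \<in> W \<Longrightarrow> a \<in> R \<or> a \<in> NR" by (auto simp: NR_def)
lemma R_NR_disj: "a \<in> R \<Longrightarrow> a \<notin> NR" by (auto simp: NR_def)

lemma tw_W: "r \<in> R \<Longrightarrow> tw r \<in> W"
  using tw_props partof_W R_W by blast

lemma tw_part: assumes "r \<in> R" shows "partof (tw r) = partof r"
proof -
  have "tw r \<in> partof r" using tw_props[OF assms] by blast
  moreover have "partof r \<in> AA" using partof R_W assms by blast
  ultimately show ?thesis using partof_eq tw_W[OF assms] by blast
qed

lemma r_Par_tw: "r \<in> R \<Longrightarrow> r \<in> Par (tw r)"
  using tw_props[of r] tw_part[of r] partof[of r] R_W by (auto simp: Par_def)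

lemma tw_NR: "r \<in> R \<Longrightarrow> tw r \<in> NR"
  using r_Par_tw tw_W by (auto simp: NR_def R_def)

lemma tw_inj: assumes "r \<in> R" "r' \<in> R" "tw r = tw r'" shows "r = r'"
proof (rule ccontr)
  assume ne: "r \<noteq> r'"
  have W: "r \<in> W" "r' \<in> W" using assms R_W by auto
  have pe: "path r = path r'" using tw_props assms by metis
  have pp: "partof r = partof r'" using tw_part assms by metis
  have "rk r \<noteq> rk r'" using rk_inj W ne by (auto dest: inj_onD)
  then have "r \<in> Par r' \<or> r' \<in> Par r"
    using pe pp partof W ne by (auto simp: Par_def)
  then show False using assms by (auto simp: R_def)
qed

definition par :: "'v \<Rightarrow> 'v" where
  "par a = (if \<exists>r\<in>R. tw r = a then (SOME r. r \<in> R \<and> tw r = a) else (SOME b. b \<in> Par a))"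

lemma par_tw: assumes "r \<in> R" shows "par (tw r) = r"
proof -
  have "\<exists>r'. r' \<in> R \<and> tw r' = tw r" using assms by blast
  then have "(SOME r'. r' \<in> R \<and> tw r' = tw r) \<in> R \<and> tw (SOME r'. r' \<in> R \<and> tw r' = tw r) = tw r"
    by (rule someI_ex)
  then show ?thesis using tw_inj assms by (auto simp: par_def)
qed

lemma par_Par: assumes a: "a \<in> NR" shows "par a \<in> Par a"
proof (cases "\<exists>r\<in>R. tw r = a")
  case True
  then obtain r where "r \<in> R" "tw r = a" by blast
  then show ?thesis using par_tw r_Par_tw by metis
next
  case False
  have "Par a \<noteq> {}" using a by (auto simp: NR_def R_def)
  then have "\<exists>b. b \<in> Par a" by blast
  then have "(SOME b. b \<in> Par a) \<in> Par a" by (rule someI_ex)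
  then show ?thesis using False by (simp add: par_def)
qed

lemma par_props: assumes a: "a \<in> NR"
  shows "par a \<in> W" "par a \<noteq> a" "partof (par a) = partof a"
    "path a \<subseteq> path (par a)" "rk (par a) < rk a"
proof -
  have aW: "a \<in> W" using a NR_W by auto
  have p: "par a \<in> partof a - {a}" "path a \<subseteq> path (par a)" "rk (par a) < rk a"
    using par_Par[OF a] by (auto simp: Par_def)
  show "par a \<in> W" using p partof_W[OF aW] by blast
  then show "partof (par a) = partof a" using partof_eq p partof[OF aW] by blast
  show "par a \<noteq> a" "path a \<subseteq> path (par a)" "rk (par a) < rk a" using p by auto
qed

definition "Rel = {(a, par a) | a. a \<in> NR}"
definition anc :: "'v \<Rightarrow> 'v set" where "anc a = {c. (a,c) \<in> Rel\<^sup>*}"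

lemma anc_self: "a \<in> anc a" by (simp add: anc_def)

lemma anc_R: assumes "r \<in> R" shows "anc r = {r}"
proof -
  have "c = r" if "(r,c) \<in> Rel\<^sup>*" for c
    using that
  proof (cases rule: converse_rtranclE)
    case (step y)
    then show ?thesis using assms R_NR_disj by (auto simp: Rel_def)
  qed simp
  then show ?thesis by (auto simp: anc_def)
qed

lemma anc_NR: assumes "a \<in> NR" shows "anc a = insert a (anc (par a))"
proof -
  have "(a,c) \<in> Rel\<^sup>* \<longleftrightarrow> c = a \<or> (par a, c) \<in> Rel\<^sup>*" for c
  proof
    assume "(a,c) \<in> Rel\<^sup>*"
    then show "c = a \<or> (par a, c) \<in> Rel\<^sup>*"
    proof (cases rule: converse_rtranclE)
      case (step y)
      then show ?thesis by (auto simp: Rel_def)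
    qed simp
  next
    assume "c = a \<or> (par a, c) \<in> Rel\<^sup>*"
    moreover have "(a, par a) \<in> Rel" using assms by (auto simp: Rel_def)
    ultimately show "(a,c) \<in> Rel\<^sup>*" by (meson converse_rtrancl_into_rtrancl rtrancl.rtrancl_refl)
  qed
  then show ?thesis by (auto simp: anc_def)
qed

lemma anc_W: assumes "a \<in> W" "c \<in> anc a" shows "c \<in> W \<and> rk c \<le> rk a"
proof -
  have "(a,c) \<in> Rel\<^sup>*" using assms by (simp add: anc_def)
  then show ?thesis
  proof (induction rule: rtrancl_induct)
    case base
    then show ?case using assms by simp
  next
    case (step y z)
    then have "y \<in> NR" "z = par y" by (auto simp: Rel_def)
    then show ?case using par_props step by fastforce
  qed
qed

lemma anc_sub: "a \<in> W \<Longrightarrow> anc a \<subseteq> W" using anc_W by blast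

lemma anc_tw: "r \<in> R \<Longrightarrow> anc (tw r) = {tw r, r}"
  using anc_NR[OF tw_NR] par_tw anc_R by simp

definition "BIG = Suc (Max (insert 0 (rk ` W)))"

lemma rk_BIG: "a \<in> W \<Longrightarrow> rk a < BIG"
  using finW by (simp add: BIG_def le_imp_less_Suc)

definition rho :: "'v set \<Rightarrow> 'v \<Rightarrow> nat" where
  "rho S c = (if c \<in> S then 2*BIG + rk c else if c \<in> NR then BIG + rk c else rk c)"

lemma rho_inj: assumes "S \<subseteq> W" shows "inj_on (rho S) W"
proof (rule inj_onI)
  fix a b assume ab: "a \<in> W" "b \<in> W" "rho S a = rho S b"
  have "rk a = rk b" using ab rk_BIG[OF ab(1)] rk_BIG[OF ab(2)]
    by (auto simp: rho_def split: if_splits)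
  then show "a = b" using rk_inj ab by (auto dest: inj_onD)
qed

definition cand :: "'v \<Rightarrow> 'v set" where "cand x = {c \<in> W. (c,x) \<in> E\<^sup>*}"

lemma fin_cand: "finite (cand x)" by (rule finite_subset[OF _ finW]) (auto simp: cand_def)
lemma cand_W: "cand x \<subseteq> W" by (auto simp: cand_def)

definition topp :: "('v \<Rightarrow> nat) \<Rightarrow> 'v set \<Rightarrow> 'v" where
  "topp f X = (THE c. c \<in> X \<and> (\<forall>c'\<in>X. f c' \<le> f c))"

lemma topp_eq: assumes "c \<in> X" "\<forall>c'\<in>X. f c' \<le> f c" "inj_on f X"
  shows "topp f X = c"
  unfolding topp_def
proof (rule the_equality)
  show "c \<in> X \<and> (\<forall>c'\<in>X. f c' \<le> f c)" using assms by simp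
next
  fix d assume h: "d \<in> X \<and> (\<forall>c'\<in>X. f c' \<le> f d)"
  then have "f c \<le> f d" using assms(1) by blast
  moreover have "f d \<le> f c" using h assms(2) by blast
  ultimately have "f d = f c" "d \<in> X" using h by auto
  then show "d = c" using assms(1,3) by (auto dest: inj_onD)
qed

lemma topp_ex: assumes "finite X" "X \<noteq> {}" "inj_on f X"
  shows "topp f X \<in> X \<and> (\<forall>c'\<in>X. f c' \<le> f (topp f X))"
proof -
  have "Max (f ` X) \<in> f ` X" using assms by simp
  then obtain c where c: "c \<in> X" "f c = Max (f ` X)" by auto
  have "\<forall>c'\<in>X. f c' \<le> f c" using c assms by simp
  then show ?thesis using topp_eq[OF c(1) _ assms(3)] c by simp
qed

lemma topp_cong: assumes "\<And>c. c \<in> X \<Longrightarrow> f c = g c" shows "topp f X = topp g X"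
proof -
  have "\<And>c. (c \<in> X \<and> (\<forall>c'\<in>X. f c' \<le> f c)) = (c \<in> X \<and> (\<forall>c'\<in>X. g c' \<le> g c))"
    using assms by auto
  then show ?thesis unfolding topp_def by simp
qed

lemma cand_NR: assumes "x \<in> M - SV" shows "cand x \<inter> NR \<noteq> {}"
proof -
  obtain a where a: "a \<in> W" "(a,x) \<in> E\<^sup>*" using Mout_has assms by blast
  show ?thesis
  proof (cases "a \<in> NR")
    case True then show ?thesis using a by (auto simp: cand_def)
  next
    case False
    then have r: "a \<in> R" using a R_NR by blast
    have "x \<in> path a" using a assms by (simp add: path_def)
    then have "x \<in> path (tw a)" using tw_props[OF r] by simp
    then have "tw a \<in> cand x" using tw_W[OF r] by (simp add: path_def cand_def)
    then show ?thesis using tw_NR[OF r] by blast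
  qed
qed

lemma topp_base: assumes "S \<subseteq> W" "x \<in> M - SV"
  shows "topp (rho S) (cand x) \<in> cand x \<and> (\<forall>c'\<in>cand x. rho S c' \<le> rho S (topp (rho S) (cand x)))"
proof -
  have "cand x \<noteq> {}" using cand_NR[OF assms(2)] by blast
  moreover have "inj_on (rho S) (cand x)" using rho_inj[OF assms(1)] cand_W inj_on_subset by blast
  ultimately show ?thesis using topp_ex[OF fin_cand] by blast
qed

lemma T1: assumes S: "S \<subseteq> W" and x: "x \<in> M - SV" and ne: "cand x \<inter> S \<noteq> {}"
  shows "topp (rho S) (cand x) \<in> S \<and> (\<forall>c\<in>cand x \<inter> S. rk c \<le> rk (topp (rho S) (cand x)))"
proof -
  let ?t = "topp (rho S) (cand x)"
  have t: "?t \<in> cand x" "\<forall>c'\<in>cand x. rho S c' \<le> rho S ?t" using topp_base[OF S x] by auto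
  obtain c0 where c0: "c0 \<in> cand x" "c0 \<in> S" using ne by blast
  have "rho S c0 \<ge> 2*BIG" using c0 by (simp add: rho_def)
  then have "rho S ?t \<ge> 2*BIG" using t c0 by fastforce
  moreover have "?t \<in> W" using t cand_W by blast
  ultimately have tS: "?t \<in> S" using rk_BIG[of ?t] by (auto simp: rho_def split: if_splits)
  have "\<forall>c\<in>cand x \<inter> S. rk c \<le> rk ?t" using t tS by (auto simp: rho_def)
  then show ?thesis using tS by simp
qed

lemma T2: assumes S: "S \<subseteq> W" and x: "x \<in> M - SV" and e: "cand x \<inter> S = {}"
  shows "topp (rho S) (cand x) \<in> NR"
proof -
  let ?t = "topp (rho S) (cand x)"
  have t: "?t \<in> cand x" "\<forall>c'\<in>cand x. rho S c' \<le> rho S ?t" using topp_base[OF S x] by auto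
  obtain c0 where c0: "c0 \<in> cand x" "c0 \<in> NR" using cand_NR[OF x] by blast
  have "rho S c0 \<ge> BIG" using c0 e by (auto simp: rho_def)
  then have "rho S ?t \<ge> BIG" using t c0 by fastforce
  moreover have "?t \<in> W" "?t \<notin> S" using t cand_W e by auto
  ultimately show ?thesis using rk_BIG[of ?t] by (auto simp: rho_def split: if_splits)
qed

definition Br :: "('v \<Rightarrow> 'v) \<Rightarrow> 'v set \<Rightarrow> 'v \<Rightarrow> 'v" where
  "Br K S x = (if x \<notin> V then undefined else if x \<in> SV then K x
      else if x \<in> PL then x else topp (rho S) (cand x))"

lemma Br_out: "x \<in> M - SV \<Longrightarrow> Br K S x = topp (rho S) (cand x)"
  by (auto simp: Br_def matches_def)

lemma Br_SV: "x \<in> SV \<Longrightarrow> Br K S x = K x"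
  using SV_V by (auto simp: Br_def)

lemma Br_bracket: assumes K: "K \<in> Bu" and S: "S \<subseteq> W" shows "is_bracket V E (Br K S)"
  unfolding is_bracket_def
proof (intro conjI ballI allI impI)
  fix a assume a: "a \<in> PL"
  show "Br K S a = a"
  proof (cases "a \<in> SV")
    case True
    then have "a \<in> players SV SE" using players_SE a by simp
    then show ?thesis using True Bu_brackets K by (auto simp: Br_SV is_bracket_def)
  next
    case False then show ?thesis using a PL_V by (auto simp: Br_def)
  qed
next
  fix v assume "v \<notin> V" then show "Br K S v = undefined" by (simp add: Br_def)
next
  fix x assume x: "x \<in> M"
  show "Br K S x \<in> Br K S ` in_nbrs E x"
  proof (cases "x \<in> SV")
    case True
    then have "x \<in> matches SV SE" using matches_SE x by simp
    then have "K x \<in> K ` in_nbrs SE x" using Bu_brackets K by (auto simp: is_bracket_def)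
    then obtain d where d: "d \<in> in_nbrs E x" "K x = K d" using in_nbrs_SE True by auto
    then have "d \<in> SV" using inn_SV True by (auto simp: in_nbrs_def)
    then have "Br K S x = Br K S d" using d True by (simp add: Br_SV)
    then show ?thesis using d(1) by (rule image_eqI)
  next
    case False
    then have xo: "x \<in> M - SV" using x by simp
    let ?t = "topp (rho S) (cand x)"
    have t: "?t \<in> cand x" "\<forall>c'\<in>cand x. rho S c' \<le> rho S ?t" using topp_base[OF S xo] by auto
    then have tW: "?t \<in> W" and tx: "(?t, x) \<in> E\<^sup>*" by (auto simp: cand_def)
    have "?t \<noteq> x" using tW xo by (auto simp: matches_def)
    then obtain d where d: "(?t, d) \<in> E\<^sup>*" "(d,x) \<in> E" using tx by (metis rtranclE)
    have dV: "d \<in> V" using d EV by auto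
    have dS: "d \<notin> SV" using W_reach_notSV tW d by blast
    have "Br K S d = ?t"
    proof (cases "d \<in> PL")
      case True
      then have "d = ?t" using player_in d by metis
      then show ?thesis using True dV dS by (simp add: Br_def)
    next
      case False
      then have dM: "d \<in> M - SV" using dV dS by (simp add: matches_def)
      have sub: "cand d \<subseteq> cand x" using d by (auto simp: cand_def)
      have "?t \<in> cand d" using d tW by (simp add: cand_def)
      moreover have "\<forall>c'\<in>cand d. rho S c' \<le> rho S ?t" using t sub by auto
      moreover have "inj_on (rho S) (cand d)" using rho_inj[OF S] cand_W inj_on_subset by blast
      ultimately have "topp (rho S) (cand d) = ?t" by (rule topp_eq)
      then show ?thesis using Br_out[OF dM] by simp
    qed
    then show ?thesis using d Br_out[OF xo] by (force simp: in_nbrs_def)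
  qed
qed

end

context ctx
begin

lemma V1: assumes a: "a \<in> W" and x: "x \<in> path a" shows "Br K (anc a) x = a"
proof -
  have xo: "x \<in> M - SV" using path_notSV a x by blast
  have ac: "a \<in> cand x \<inter> anc a" using a x anc_self by (auto simp: cand_def path_def)
  let ?t = "topp (rho (anc a)) (cand x)"
  have t: "?t \<in> anc a" "rk a \<le> rk ?t" using T1[OF anc_sub[OF a] xo] ac by blast+
  have "rk ?t \<le> rk a" "?t \<in> W" using anc_W[OF a t(1)] by auto
  then have "rk ?t = rk a" using t by simp
  then have "?t = a" using rk_inj \<open>?t \<in> W\<close> a by (auto dest: inj_onD)
  then show ?thesis using Br_out[OF xo] by simp
qed

lemma V2: assumes a: "a \<in> NR" and x: "x \<in> M - SV" "x \<notin> path a"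
  shows "Br K (anc a) x = Br K (anc (par a)) x"
proof -
  have "rho (anc a) c = rho (anc (par a)) c" if c: "c \<in> cand x" for c
  proof -
    have "c \<noteq> a" using c x by (auto simp: cand_def path_def)
    then have "c \<in> anc a \<longleftrightarrow> c \<in> anc (par a)" using anc_NR[OF a] by auto
    then show ?thesis by (simp add: rho_def)
  qed
  then have "topp (rho (anc a)) (cand x) = topp (rho (anc (par a))) (cand x)"
    by (rule topp_cong)
  then show ?thesis using Br_out[OF x(1)] by simp
qed

lemma V4: assumes x: "x \<in> M - SV" shows "Br K {} x \<in> NR"
  using T2[of "{}" x] x Br_out[OF x] by simp

lemma V5: assumes r: "r \<in> R" and x: "x \<in> M - SV" shows "Br K (anc (tw r)) x \<in> NR"
proof -
  have S: "anc (tw r) \<subseteq> W" using anc_sub tw_W r by blast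
  show ?thesis
  proof (cases "cand x \<inter> anc (tw r) = {}")
    case True
    then show ?thesis using T2[OF S x] Br_out[OF x] by simp
  next
    case False
    let ?t = "topp (rho (anc (tw r))) (cand x)"
    have t: "?t \<in> anc (tw r)" "\<forall>c\<in>cand x \<inter> anc (tw r). rk c \<le> rk ?t"
      using T1[OF S x False] by auto
    have "?t = tw r"
    proof (rule ccontr)
      assume ne: "?t \<noteq> tw r"
      have "?t \<in> {tw r, r}" using t(1) anc_tw[OF r] by simp
      then have tr: "?t = r" using ne by blast
      have "?t \<in> cand x" using topp_base[OF S x] by blast
      then have "(r, x) \<in> E\<^sup>*" using tr by (simp add: cand_def)
      then have "x \<in> path r" using x by (simp add: path_def)
      then have "x \<in> path (tw r)" using tw_props[OF r] by simp
      then have "tw r \<in> cand x" using tw_W[OF r] by (simp add: cand_def path_def)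
      moreover have "tw r \<in> anc (tw r)" by (rule anc_self)
      ultimately have "rk (tw r) \<le> rk ?t" using t(2) by blast
      then have "rk (tw r) \<le> rk r" using tr by simp
      then show False using tw_props[OF r] by simp
    qed
    then show ?thesis using tw_NR[OF r] Br_out[OF x] by simp
  qed
qed

lemma V6: assumes r: "r \<in> R" and x: "x \<in> M - SV" "x \<notin> path r" shows "Br K (anc r) x \<in> NR"
proof -
  have "cand x \<inter> anc r = {}" using anc_R[OF r] x by (auto simp: cand_def path_def)
  moreover have "anc r \<subseteq> W" using anc_R[OF r] r R_W by auto
  ultimately have "topp (rho (anc r)) (cand x) \<in> NR" using T2[of "anc r" x] x by blast
  then show ?thesis using Br_out[OF x(1)] by simp
qed

lemma score_sum: "score V E \<sigma> f B = (\<Sum>x\<in>M. if f x = B x then \<sigma> x else 0)"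
  by (simp add: score_def sum.inter_filter[OF finM])

definition hsum :: "('v \<Rightarrow> real) \<Rightarrow> ('v \<Rightarrow> 'v) \<Rightarrow> ('v \<Rightarrow> 'v) \<Rightarrow> real" where
  "hsum \<sigma> K X = (\<Sum>x\<in>M \<inter> SV. if K x = X x then \<sigma> x else 0)"

lemma hsum_score: "hsum \<sigma> K X = score SV SE \<sigma> K (restr X)"
proof -
  have fin: "finite (M \<inter> SV)" using finM by simp
  have eq: "{x \<in> matches SV SE. K x = restr X x} = {x \<in> M \<inter> SV. K x = X x}"
    by (auto simp: matches_SE restr_def)
  have "score SV SE \<sigma> K (restr X) = sum \<sigma> {x \<in> M \<inter> SV. K x = X x}"
    unfolding score_def eq by (rule refl)
  also have "\<dots> = hsum \<sigma> K X" unfolding hsum_def by (rule sum.inter_filter[OF fin])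
  finally show ?thesis by simp
qed

lemma score_split: "score V E \<sigma> (Br K S) X = hsum \<sigma> K X + (\<Sum>x\<in>M - SV. if Br K S x = X x then \<sigma> x else 0)"
proof -
  have "score V E \<sigma> (Br K S) X = (\<Sum>x\<in>M \<inter> SV. if Br K S x = X x then \<sigma> x else 0) + (\<Sum>x\<in>M - SV. if Br K S x = X x then \<sigma> x else 0)"
    unfolding score_sum using sum.Int_Diff[OF finM] by blast
  moreover have "(\<Sum>x\<in>M \<inter> SV. if Br K S x = X x then \<sigma> x else 0) = hsum \<sigma> K X"
    unfolding hsum_def by (rule sum.cong) (auto simp: Br_SV)
  ultimately show ?thesis by simp
qed

lemma win_nested:
  assumes B: "is_bracket V E B" and B': "is_bracket V E B'"
  shows "{x\<in>M. B x = c} \<subseteq> {x\<in>M. B' x = c} \<or> {x\<in>M. B' x = c} \<subseteq> {x\<in>M. B x = c}"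
proof (rule ccontr)
  assume "\<not> ?thesis"
  then obtain x y where x: "x \<in> M" "B x = c" "B' x \<noteq> c" and y: "y \<in> M" "B' y = c" "B y \<noteq> c" by auto
  have cx: "(c,x) \<in> E\<^sup>*" using bracket_in_P[OF B] x M_V by auto
  have cy: "(c,y) \<in> E\<^sup>*" using bracket_in_P[OF B'] y M_V by auto
  show False
    using chain[OF cx cy]
  proof
    assume "(x,y) \<in> E\<^sup>*"
    then have "B' x = c" using mono_win[OF B'] y cx M_V by blast
    then show False using x by simp
  next
    assume "(y,x) \<in> E\<^sup>*"
    then have "B y = c" using mono_win[OF B] x cy M_V by blast
    then show False using y by simp
  qed
qed

lemma sum_nested_eq:
  assumes \<sigma>: "\<forall>x\<in>M. (\<sigma> x :: real) > 0" and X: "X \<subseteq> M" and Y: "Y \<subseteq> M"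
    and n: "X \<subseteq> Y \<or> Y \<subseteq> X" and s: "sum \<sigma> X = sum \<sigma> Y"
  shows "X = Y"
proof -
  have gen: "A = B" if "A \<subseteq> B" "B \<subseteq> M" "sum \<sigma> A = sum \<sigma> B" for A B
  proof (rule ccontr)
    assume "A \<noteq> B"
    then have ne: "B - A \<noteq> {}" using that by auto
    have fB: "finite B" using that finM finite_subset by blast
    have "sum \<sigma> (B - A) > 0" using ne fB that \<sigma> by (intro sum_pos) auto
    moreover have "sum \<sigma> B = sum \<sigma> (B - A) + sum \<sigma> A" using sum.subset_diff[OF that(1) fB] .
    ultimately show False using that by simp
  qed
  show ?thesis
  proof (cases "X \<subseteq> Y")
    case True show ?thesis using gen[OF True Y s] by simp
  next
    case False then have "Y \<subseteq> X" using n by blast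
    then show ?thesis using gen[OF _ X s[symmetric]] by blast
  qed
qed

end

context ctx
begin

definition Kf :: "'v set \<Rightarrow> ('v \<Rightarrow> 'v)" where
  "Kf = (SOME f. f ` AA \<subseteq> Bu \<and> (card AA \<le> card Bu \<longrightarrow> inj_on f AA) \<and> (card Bu \<le> card AA \<longrightarrow> f ` AA = Bu))"

lemma Kf_ex: "\<exists>f. f ` AA \<subseteq> Bu \<and> (card AA \<le> card Bu \<longrightarrow> inj_on f AA) \<and> (card Bu \<le> card AA \<longrightarrow> f ` AA = Bu)"
proof (cases "card AA \<le> card Bu")
  case True
  obtain f where f: "f ` AA \<subseteq> Bu" "inj_on f AA" using card_le_inj[OF finAA finBu True] by blast
  have "card Bu \<le> card AA \<longrightarrow> f ` AA = Bu"
  proof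
    assume "card Bu \<le> card AA"
    then have "card (f ` AA) = card Bu" using card_image[OF f(2)] True by simp
    then show "f ` AA = Bu" using card_subset_eq[OF finBu f(1)] by simp
  qed
  then show ?thesis using f by blast
next
  case False
  then have le: "card Bu \<le> card AA" by simp
  obtain g where g: "g ` Bu \<subseteq> AA" "inj_on g Bu" using card_le_inj[OF finBu finAA le] by blast
  obtain K0 where K0: "K0 \<in> Bu" using Bu_ne by blast
  define f where "f = (\<lambda>A. if A \<in> g ` Bu then inv_into Bu g A else K0)"
  have "f ` AA \<subseteq> Bu" using K0 by (auto simp: f_def inv_into_into)
  moreover have "Bu \<subseteq> f ` AA"
  proof
    fix K assume K: "K \<in> Bu"
    then have "f (g K) = K" using g by (simp add: f_def inv_into_f_f)
    moreover have "g K \<in> AA" using g K by blast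
    ultimately show "K \<in> f ` AA" by (metis image_eqI)
  qed
  ultimately show ?thesis using False by blast
qed

lemma Kf_all: "Kf ` AA \<subseteq> Bu \<and> (card AA \<le> card Bu \<longrightarrow> inj_on Kf AA) \<and> (card Bu \<le> card AA \<longrightarrow> Kf ` AA = Bu)"
  unfolding Kf_def by (rule someI_ex[OF Kf_ex])

definition "Extra = Bu - Kf ` AA"
definition CB :: "'v \<Rightarrow> 'v \<Rightarrow> 'v" where "CB a = Br (Kf (partof a)) (anc a)"
definition "Fam = CB ` W \<union> (\<lambda>K. Br K {}) ` Extra"

lemma Kf_partof: "a \<in> W \<Longrightarrow> Kf (partof a) \<in> Bu"
  using Kf_all partof by blast

lemma Fam_br: "f \<in> Fam \<Longrightarrow> is_bracket V E f"
  unfolding Fam_def CB_def using Br_bracket Kf_partof anc_sub by (auto simp: Extra_def)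

lemma winsP: assumes X: "is_bracket V E X" shows "{x \<in> path c. X x = c} = {x\<in>M. X x = c}"
proof
  show "{x \<in> path c. X x = c} \<subseteq> {x \<in> M. X x = c}" using path_M by auto
next
  show "{x \<in> M. X x = c} \<subseteq> {x \<in> path c. X x = c}"
    using bracket_in_P[OF X] M_V by (auto simp: path_def)
qed

lemma resolv:
  assumes \<sigma>: "scoring_system V E \<sigma>" and res: "resolving SV SE \<sigma> Bu"
    and B: "is_bracket V E B" and B': "is_bracket V E B'"
    and eq: "\<forall>f\<in>Fam. score V E \<sigma> f B = score V E \<sigma> f B'"
  shows "B = B'"
proof -
  have \<sigma>pos: "\<forall>x\<in>M. \<sigma> x > 0" using \<sigma> by (simp add: scoring_system_def)
  have eqCB: "score V E \<sigma> (CB a) B = score V E \<sigma> (CB a) B'" if "a \<in> W" for a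
    using eq that by (auto simp: Fam_def)
  have stepA: "{x\<in>M. B x = a} = {x\<in>M. B' x = a}" if a: "a \<in> NR" for a
  proof -
    let ?p = "par a" let ?K = "Kf (partof a)"
    have aW: "a \<in> W" using a NR_W by auto
    have pW: "?p \<in> W" and pa: "?p \<noteq> a" "partof ?p = partof a" "path a \<subseteq> path ?p"
      using par_props[OF a] by auto
    have CBa: "CB a = Br ?K (anc a)" by (simp add: CB_def)
    have CBp: "CB ?p = Br ?K (anc ?p)" using pa by (simp add: CB_def)
    have diff: "score V E \<sigma> (CB a) X - score V E \<sigma> (CB ?p) X
        = sum \<sigma> {x\<in>path a. X x = a} - sum \<sigma> {x\<in>path a. X x = ?p}" for X
    proof -
      have "score V E \<sigma> (CB a) X - score V E \<sigma> (CB ?p) X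
          = (\<Sum>x\<in>M. (if CB a x = X x then \<sigma> x else 0) - (if CB ?p x = X x then \<sigma> x else 0))"
        by (simp add: score_sum sum_subtractf)
      also have "\<dots> = (\<Sum>x\<in>M. if x \<in> path a then (if X x = a then \<sigma> x else 0) - (if X x = ?p then \<sigma> x else 0) else 0)"
      proof (rule sum.cong[OF refl])
        fix x assume x: "x \<in> M"
        show "(if CB a x = X x then \<sigma> x else 0) - (if CB ?p x = X x then \<sigma> x else 0)
            = (if x \<in> path a then (if X x = a then \<sigma> x else 0) - (if X x = ?p then \<sigma> x else 0) else 0)"
        proof (cases "x \<in> path a")
          case True
          have "CB a x = a" using V1[OF aW True] CBa by simp
          moreover have "CB ?p x = ?p" using V1[OF pW] True pa CBp by auto
          ultimately show ?thesis using True by auto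
        next
          case False
          have "CB a x = CB ?p x"
          proof (cases "x \<in> SV")
            case True then show ?thesis using CBa CBp by (simp add: Br_SV)
          next
            case False' : False
            then have "x \<in> M - SV" using x by simp
            then show ?thesis using V2[OF a _ False] CBa CBp by simp
          qed
          then show ?thesis using False by simp
        qed
      qed
      also have "\<dots> = (\<Sum>x\<in>M \<inter> path a. (if X x = a then \<sigma> x else 0) - (if X x = ?p then \<sigma> x else 0))"
        by (rule sum.inter_restrict[OF finM, symmetric])
      also have "M \<inter> path a = path a" using path_M by blast
      also have "(\<Sum>x\<in>path a. (if X x = a then \<sigma> x else 0) - (if X x = ?p then \<sigma> x else 0))
          = sum \<sigma> {x\<in>path a. X x = a} - sum \<sigma> {x\<in>path a. X x = ?p}"
        by (simp add: sum_subtractf sum.inter_filter[OF fin_path])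
      finally show ?thesis .
    qed
    define \<alpha> where "\<alpha> X = {x\<in>path a. X x = a}" for X
    define \<beta> where "\<beta> X = {x\<in>path a. X x = ?p}" for X
    have excl: "\<alpha> X = {} \<or> \<beta> X = {}" if X: "is_bracket V E X" for X
    proof (rule ccontr)
      assume "\<not> ?thesis"
      then obtain x y where x: "x \<in> path a" "X x = a" and y: "y \<in> path a" "X y = ?p"
        by (auto simp: \<alpha>_def \<beta>_def)
      have ax: "(a,x) \<in> E\<^sup>*" and ay: "(a,y) \<in> E\<^sup>*" using x y by (auto simp: path_def)
      have px: "(?p,x) \<in> E\<^sup>*" using x pa by (auto simp: path_def)
      have xV: "x \<in> V" and yV: "y \<in> V" using x y path_M M_V by auto
      show False using chain[OF ax ay]
      proof
        assume "(x,y) \<in> E\<^sup>*"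
        then have "X x = ?p" using mono_win[OF X] y px yV by blast
        then show False using x pa by simp
      next
        assume "(y,x) \<in> E\<^sup>*"
        then have "X y = a" using mono_win[OF X] x ay xV by blast
        then show False using y pa by simp
      qed
    qed
    have pos: "sum \<sigma> (\<alpha> X) > 0" if "\<alpha> X \<noteq> {}" for X
    proof -
      have "finite (\<alpha> X)" "\<alpha> X \<subseteq> M" using fin_path path_M by (auto simp: \<alpha>_def)
      then show ?thesis using that \<sigma>pos by (intro sum_pos) auto
    qed
    have nn: "sum \<sigma> (\<beta> X) \<ge> 0" for X
    proof -
      have "\<beta> X \<subseteq> M" using path_M by (auto simp: \<beta>_def)
      then have "\<forall>x\<in>\<beta> X. 0 \<le> \<sigma> x" using \<sigma>pos by (meson less_imp_le subsetD)
      then show ?thesis by (intro sum_nonneg) auto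
    qed
    have E1: "sum \<sigma> (\<alpha> B) - sum \<sigma> (\<beta> B) = sum \<sigma> (\<alpha> B') - sum \<sigma> (\<beta> B')"
      using diff[of B] diff[of B'] eqCB[OF aW] eqCB[OF pW] by (simp add: \<alpha>_def \<beta>_def)
    have "\<alpha> B = \<alpha> B'"
    proof (cases "\<alpha> B = {}")
      case True
      show ?thesis
      proof (rule ccontr)
        assume "\<alpha> B \<noteq> \<alpha> B'" then have ne: "\<alpha> B' \<noteq> {}" using True by simp
        then have "\<beta> B' = {}" using excl[OF B'] by simp
        then show False using E1 True pos[OF ne] nn[of B] by simp
      qed
    next
      case False
      then have b: "\<beta> B = {}" using excl[OF B] by simp
      have ne: "\<alpha> B' \<noteq> {}"
      proof
        assume "\<alpha> B' = {}" then show False using E1 b pos[OF False] nn[of B'] by simp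
      qed
      then have "\<beta> B' = {}" using excl[OF B'] by simp
      then have s: "sum \<sigma> (\<alpha> B) = sum \<sigma> (\<alpha> B')" using E1 b by simp
      have w: "\<alpha> X = {x\<in>M. X x = a}" if "is_bracket V E X" for X
        using winsP[OF that] by (simp add: \<alpha>_def)
      have "\<alpha> B \<subseteq> M" "\<alpha> B' \<subseteq> M" using w B B' by auto
      moreover have "\<alpha> B \<subseteq> \<alpha> B' \<or> \<alpha> B' \<subseteq> \<alpha> B" using win_nested[OF B B'] w B B' by simp
      ultimately show ?thesis using sum_nested_eq[OF \<sigma>pos _ _ _ s] by blast
    qed
    then show ?thesis using winsP[OF B] winsP[OF B'] by (simp add: \<alpha>_def)
  qed

  have nrtype: "(\<Sum>x\<in>D. if f x = B x then \<sigma> x else 0) = (\<Sum>x\<in>D. if f x = B' x then \<sigma> x else 0)"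
    if D: "D \<subseteq> M" and f: "\<forall>x\<in>D. f x \<in> NR" for f D
  proof (rule sum.cong[OF refl])
    fix x assume x: "x \<in> D"
    have "f x \<in> NR" using f x by blast
    then have "{y\<in>M. B y = f x} = {y\<in>M. B' y = f x}" using stepA by blast
    then have "x \<in> {y\<in>M. B y = f x} \<longleftrightarrow> x \<in> {y\<in>M. B' y = f x}" by simp
    moreover have "x \<in> M" using x D by blast
    ultimately have iff: "B x = f x \<longleftrightarrow> B' x = f x" by simp
    show "(if f x = B x then \<sigma> x else 0) = (if f x = B' x then \<sigma> x else 0)"
    proof (cases "B x = f x")
      case True
      then have "f x = B x" "f x = B' x" using iff by auto
      then show ?thesis by simp
    next
      case False
      then have "f x \<noteq> B x" "f x \<noteq> B' x" using iff by auto
      then show ?thesis by simp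
    qed
  qed

  have stepB: "hsum \<sigma> (Kf (partof r)) B = hsum \<sigma> (Kf (partof r)) B' \<and> {x\<in>M. B x = r} = {x\<in>M. B' x = r}"
    if r: "r \<in> R" for r
  proof -
    let ?K = "Kf (partof r)" let ?t = "tw r"
    have rW: "r \<in> W" using r R_W by auto
    have tW: "?t \<in> W" using tw_W r by auto
    have CBt: "CB ?t = Br ?K (anc ?t)" using tw_part[OF r] by (simp add: CB_def)
    have "score V E \<sigma> (CB ?t) B = score V E \<sigma> (CB ?t) B'" using eqCB tW by blast
    moreover have "\<forall>x\<in>M-SV. Br ?K (anc ?t) x \<in> NR" using V5 r by blast
    then have "(\<Sum>x\<in>M-SV. if Br ?K (anc ?t) x = B x then \<sigma> x else 0)
        = (\<Sum>x\<in>M-SV. if Br ?K (anc ?t) x = B' x then \<sigma> x else 0)"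
      using nrtype[of "M - SV"] by blast
    ultimately have h: "hsum \<sigma> ?K B = hsum \<sigma> ?K B'" using CBt score_split by simp
    define g where "g X = (\<Sum>x\<in>M-SV. if Br ?K (anc r) x = X x then \<sigma> x else 0)" for X
    have "score V E \<sigma> (CB r) B = score V E \<sigma> (CB r) B'" using eqCB rW by blast
    then have gE: "g B = g B'" using h score_split by (simp add: CB_def g_def)
    have pr: "path r \<subseteq> M - SV" using path_notSV rW .
    have gs: "g X = (\<Sum>x\<in>M-SV-path r. if Br ?K (anc r) x = X x then \<sigma> x else 0) + sum \<sigma> {x\<in>path r. X x = r}" for X
    proof -
      have "g X = (\<Sum>x\<in>M-SV-path r. if Br ?K (anc r) x = X x then \<sigma> x else 0)
          + (\<Sum>x\<in>path r. if Br ?K (anc r) x = X x then \<sigma> x else 0)"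
        unfolding g_def by (rule sum.subset_diff[OF pr]) (simp add: finM)
      moreover have "(\<Sum>x\<in>path r. if Br ?K (anc r) x = X x then \<sigma> x else 0)
          = (\<Sum>x\<in>path r. if X x = r then \<sigma> x else 0)"
        using V1[OF rW] by (intro sum.cong) auto
      moreover have "(\<Sum>x\<in>path r. if X x = r then \<sigma> x else 0) = sum \<sigma> {x\<in>path r. X x = r}"
        by (simp add: sum.inter_filter[OF fin_path])
      ultimately show ?thesis by simp
    qed
    have "\<forall>x\<in>M-SV-path r. Br ?K (anc r) x \<in> NR" using V6 r by blast
    then have "(\<Sum>x\<in>M-SV-path r. if Br ?K (anc r) x = B x then \<sigma> x else 0)
        = (\<Sum>x\<in>M-SV-path r. if Br ?K (anc r) x = B' x then \<sigma> x else 0)"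
      using nrtype[of "M - SV - path r"] by blast
    then have s: "sum \<sigma> {x\<in>M. B x = r} = sum \<sigma> {x\<in>M. B' x = r}"
      using gE gs[of B] gs[of B'] winsP[OF B] winsP[OF B'] by simp
    have "{x\<in>M. B x = r} = {x\<in>M. B' x = r}"
      using sum_nested_eq[OF \<sigma>pos _ _ win_nested[OF B B'] s] by blast
    then show ?thesis using h by simp
  qed

  have winsW: "{x\<in>M. B x = c} = {x\<in>M. B' x = c}" if "c \<in> W" for c
    using stepA stepB R_NR that by blast

  have hall: "hsum \<sigma> K B = hsum \<sigma> K B'" if K: "K \<in> Bu" for K
  proof (cases "K \<in> Kf ` AA")
    case True
    then obtain A where A: "A \<in> AA" "K = Kf A" by blast
    have fA: "finite A" using A parts_sub finW finite_subset by blast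
    have neA: "A \<noteq> {}" using A_nonempty A by blast
    have "Min (rk ` A) \<in> rk ` A" using fA neA by simp
    then obtain r where r: "r \<in> A" "rk r = Min (rk ` A)" by auto
    have rmin: "\<forall>b\<in>A. rk r \<le> rk b" using r fA by simp
    have rW: "r \<in> W" using r A parts_sub by blast
    have pr: "partof r = A" using partof_eq rW A r by blast
    have "Par r = {}" using rmin pr by (auto simp: Par_def)
    then have "r \<in> R" using rW by (simp add: R_def)
    then have "hsum \<sigma> (Kf (partof r)) B = hsum \<sigma> (Kf (partof r)) B'" using stepB by blast
    then show ?thesis using pr A by simp
  next
    case False
    then have "K \<in> Extra" using K by (simp add: Extra_def)
    then have "score V E \<sigma> (Br K {}) B = score V E \<sigma> (Br K {}) B'" using eq by (auto simp: Fam_def)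
    moreover have "\<forall>x\<in>M-SV. Br K {} x \<in> NR" using V4 by blast
    then have "(\<Sum>x\<in>M-SV. if Br K {} x = B x then \<sigma> x else 0)
        = (\<Sum>x\<in>M-SV. if Br K {} x = B' x then \<sigma> x else 0)"
      using nrtype[of "M - SV"] by blast
    ultimately show ?thesis using score_split by simp
  qed

  have rB: "restr B = restr B'"
  proof (rule ccontr)
    assume ne: "restr B \<noteq> restr B'"
    obtain K where K: "K \<in> Bu" "score SV SE \<sigma> K (restr B) \<noteq> score SV SE \<sigma> K (restr B')"
      using res restr_br[OF B] restr_br[OF B'] ne unfolding resolving_def by blast
    then show False using hall[OF K(1)] hsum_score by simp
  qed
  have onSV: "B x = B' x" if "x \<in> SV" for x
    using fun_cong[OF rB, of x] that by (simp add: restr_def)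
  show "B = B'"
  proof (rule ext)
    fix x show "B x = B' x"
    proof (cases "x \<in> V")
      case False then show ?thesis using B B' by (simp add: is_bracket_def)
    next
      case xV: True
      show ?thesis
      proof (cases "x \<in> SV")
        case True then show ?thesis by (rule onSV)
      next
        case nS: False
        show ?thesis
        proof (cases "x \<in> PL")
          case True then show ?thesis using B B' by (simp add: is_bracket_def)
        next
          case False
          then have xM: "x \<in> M" using xV by (simp add: matches_def)
          have tr1: "B' x = B x" if "B x \<in> W" using winsW[OF that] xM by blast
          have tr2: "B x = B' x" if "B' x \<in> W" using winsW[OF that] xM by blast
          have uu: "Y u = Y x" if Y: "is_bracket V E Y" and Yx: "Y x \<in> Pset V E u" for Y
          proof -
            have cu: "(Y x, u) \<in> E\<^sup>*" using Yx by (simp add: Pset_def)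
            have cx: "(Y x, x) \<in> E\<^sup>*" using bracket_in_P[OF Y xV] by simp
            have "\<not> (x,u) \<in> E\<^sup>*"
            proof
              assume "(x,u) \<in> E\<^sup>*"
              then have "Pset V E x \<subseteq> Pset V E u" by (rule P_mono)
              then show False using nS xV by (simp add: SV_iff)
            qed
            then have "(u,x) \<in> E\<^sup>*" using chain[OF cx cu] by blast
            then show ?thesis using mono_win[OF Y] cu xV by blast
          qed
          have pl: "B x \<in> PL" "B' x \<in> PL" using bracket_in_P[OF B xV] bracket_in_P[OF B' xV] by auto
          show ?thesis
          proof (cases "B x \<in> W")
            case True then show ?thesis using tr1 by simp
          next
            case F1: False
            show ?thesis
            proof (cases "B' x \<in> W")
              case True then show ?thesis using tr2 by simp
            next
              case False
              then have "B' u = B' x" using uu[OF B'] pl by blast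
              moreover have "B u = B x" using uu[OF B] pl F1 by blast
              ultimately show ?thesis using onSV[OF u_SV] by simp
            qed
          qed
        qed
      qed
    qed
  qed
qed

end

context ctx
begin

lemma sink_path: obtains z where "\<forall>a\<in>W. z \<in> path a"
proof -
  obtain z where z: "z \<in> V" "\<forall>v\<in>V. (v,z) \<in> E\<^sup>*" using sink by blast
  have "z \<in> path a" if a: "a \<in> W" for a
  proof -
    have aV: "a \<in> V" using a PL_V by auto
    have az: "(a,z) \<in> E\<^sup>*" using z aV by blast
    have "z \<notin> PL"
    proof
      assume zP: "z \<in> PL"
      then have "a = z" using player_in az by blast
      moreover have "u = z" using player_in zP z u by blast
      ultimately have "a \<in> Pset V E u" using a by (simp add: Pset_def)
      then show False using a by simp
    qed
    then have "z \<in> M" using z by (simp add: matches_def)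
    then show ?thesis using az by (simp add: path_def)
  qed
  then show ?thesis using that by blast
qed

lemma CB_inj: "inj_on CB W"
proof (rule inj_onI)
  obtain z where z: "\<forall>a\<in>W. z \<in> path a" using sink_path by blast
  fix a b assume ab: "a \<in> W" "b \<in> W" "CB a = CB b"
  have e1: "CB a z = a" using V1[OF ab(1)] z ab(1) by (simp add: CB_def)
  have e2: "CB b z = b" using V1[OF ab(2)] z ab(2) by (simp add: CB_def)
  have "a = CB a z" using e1 by (rule sym)
  also have "\<dots> = CB b z" using ab(3) by (rule fun_cong)
  also have "\<dots> = b" by (rule e2)
  finally show "a = b" .
qed

lemma Br_K_eq: assumes "K \<in> Bu" "K' \<in> Bu" "Br K S = Br K' S'" shows "K = K'"
proof -
  have "\<forall>x\<in>SV. K x = K' x"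
  proof
    fix x assume x: "x \<in> SV"
    have "Br K S x = Br K' S' x" using assms by simp
    then show "K x = K' x" using x by (simp add: Br_SV)
  qed
  then show ?thesis using Bu_eqI assms by blast
qed

lemma card_Fam: "card Fam = card W + card Extra"
proof -
  have fE: "finite Extra" using finBu by (simp add: Extra_def)
  have i2: "inj_on (\<lambda>K. Br K {}) Extra"
    by (rule inj_onI) (use Br_K_eq in \<open>auto simp: Extra_def\<close>)
  have disj: "CB ` W \<inter> (\<lambda>K. Br K {}) ` Extra = {}"
  proof (rule ccontr)
    assume "CB ` W \<inter> (\<lambda>K. Br K {}) ` Extra \<noteq> {}"
    then obtain a K where aK: "a \<in> W" "K \<in> Extra" "CB a = Br K {}" by auto
    then have "Kf (partof a) = K" using Br_K_eq Kf_partof[OF aK(1)] by (auto simp: CB_def Extra_def)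
    moreover have "partof a \<in> AA" using partof aK by blast
    ultimately show False using aK by (auto simp: Extra_def)
  qed
  have "card Fam = card (CB ` W) + card ((\<lambda>K. Br K {}) ` Extra)"
    unfolding Fam_def using finW fE disj by (simp add: card_Un_disjoint)
  also have "\<dots> = card W + card Extra" using card_image[OF CB_inj] card_image[OF i2] by simp
  finally show ?thesis .
qed

lemma card_final: "int (card Fam) = int (card W) + max 0 (int (card Bu) - int (card AA))"
proof (cases "card AA \<le> card Bu")
  case True
  then have inj: "inj_on Kf AA" using Kf_all by blast
  have "card Extra = card Bu - card (Kf ` AA)"
  proof -
    have sub: "Kf ` AA \<subseteq> Bu" using Kf_all by blast
    then have "finite (Kf ` AA)" using finBu finite_subset by blast
    then show ?thesis unfolding Extra_def using card_Diff_subset sub by blast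
  qed
  also have "\<dots> = card Bu - card AA" using card_image[OF inj] by simp
  finally show ?thesis using True card_Fam by simp
next
  case False
  then have "Kf ` AA = Bu" using Kf_all by simp
  then have "Extra = {}" by (simp add: Extra_def)
  then show ?thesis using False card_Fam by simp
qed

theorem main: "\<exists>\<B>. (\<forall>B\<in>\<B>. is_bracket V E B)
     \<and> int (card \<B>) = int (card (players V E - Pset V E u))
                        + max 0 (int (card Bu) - int (card AA))
     \<and> (\<forall>\<sigma>. scoring_system V E \<sigma> \<longrightarrow>
           resolving (sub_V V E u) (sub_E V E u) \<sigma> Bu \<longrightarrow> resolving V E \<sigma> \<B>)"
proof (intro exI conjI allI impI)
  show "\<forall>B\<in>Fam. is_bracket V E B" using Fam_br by blast
  show "int (card Fam) = int (card W) + max 0 (int (card Bu) - int (card AA))" by (rule card_final)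
  fix \<sigma> assume \<sigma>: "scoring_system V E \<sigma>" and res: "resolving SV SE \<sigma> Bu"
  show "resolving V E \<sigma> Fam"
    unfolding resolving_def
  proof (intro allI impI)
    fix B B' assume B: "is_bracket V E B" and B': "is_bracket V E B'" and ne: "B \<noteq> B'"
    show "\<exists>Bi\<in>Fam. score V E \<sigma> Bi B \<noteq> score V E \<sigma> Bi B'"
    proof (rule ccontr)
      assume "\<not> ?thesis"
      then have "\<forall>f\<in>Fam. score V E \<sigma> f B = score V E \<sigma> f B'" by blast
      then have "B = B'" using resolv[OF \<sigma> res B B'] by blast
      then show False using ne by simp
    qed
  qed
qed

end

theorem proposition5p11:
  fixes V :: "'v set" and E :: "('v \<times> 'v) set" and u :: 'v
    and Bu :: "('v \<Rightarrow> 'v) set" and \<A> :: "'v set set"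
  assumes T: "is_SET V E"
    and u: "u \<in> V"
    and Bu_brackets: "\<forall>B\<in>Bu. is_bracket (sub_V V E u) (sub_E V E u) B"
    and Bu_ne: "Bu \<noteq> {}"
    and A_part: "\<Union>\<A> = players V E - Pset V E u"
    and A_nonempty: "\<forall>A\<in>\<A>. A \<noteq> {}"
    and A_disj: "\<forall>A\<in>\<A>. \<forall>A'\<in>\<A>. A \<noteq> A' \<longrightarrow> A \<inter> A' = {}"
    and A_cond: "\<forall>a\<in>players V E - Pset V E u. \<forall>A\<in>\<A>. a \<in> A \<longrightarrow>
         (\<exists>b\<in>A - {a}. \<forall>x\<in>matches V E. a \<in> Pset V E x \<longrightarrow> b \<in> Pset V E x)"
  shows "\<exists>\<B>. (\<forall>B\<in>\<B>. is_bracket V E B)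
     \<and> int (card \<B>) = int (card (players V E - Pset V E u))
                        + max 0 (int (card Bu) - int (card \<A>))
     \<and> (\<forall>\<sigma>. scoring_system V E \<sigma> \<longrightarrow>
           resolving (sub_V V E u) (sub_E V E u) \<sigma> Bu \<longrightarrow> resolving V E \<sigma> \<B>)"
proof -
  interpret ctx V E u Bu \<A>
    using assms by (unfold_locales) auto
  show ?thesis by (rule main)
qed

end
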